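(* Let $M$ be a $*$-left Ehresmann monoid with basis $H$. Then: (i) if $h_1\cdots h_n$ is in $H$-canonical form, then $(h_1\cdots h_n)^*=h_n^*$ and $(h_1\cdots h_n)^+=h_1^+$; (ii) if $h\in H$ and $k\in H\setminus E$, then $h^*\ge k^+$ if and only if $hk\in H$, and in that case $(hk)^*=k^*$.
   Context: A $*$-left Ehresmann monoid is a monoid $M$ with unary operations $+,*$ such that $x^+x=x$, $(x^+y^+)^+=x^+y^+$, $x^+y^+=y^+x^+$, $(xy)^+=(xy^+)^+$, $xx^*=x$, $(x^* )^*=x^*$, $x^*y^*=y^*x^*$, $(xy^* )^*y^*=(xy^* )^*$, $(x^* )^+=x^*$, $(x^+)^*=x^+$. Projections: $E=\{a^+\}=\{a^*\}$, ordered by $e\le f$ iff $ef=e$; $\sigma$ is the least monoid congruence containing $E\times E$. $H\subseteq M$ is atomic if: (H1) $E\subseteq H$; (H2) $h\in H,e\in E$ imply $he\in H$ and $(he)^*=h^*e$; (H3) if $h\in H$, $k\in H\setminus E$, $h^*\ge k^+$ then $hk\in H$ and $(hk)^*=k^*$; (H4) every $m\in M$ is $\sigma$-related to some $h\in H$; (H5) if $h,k,w\in H$, $hk\,\sigma\,w$ and $k^*=w^*$, then some $u\in H$ has $u\,\sigma\,h$ and $u^*\ge k^+$. An expression $m=h_1\cdots h_n$ ($n\ge1$, $h_i\in H$) is in $H$-canonical form if $h_i^*<h_{i+1}^+$ for $1\le i<n$ and $h_i\notin E$ for $2\le i\le n$. $M$ has $H$-canonical forms if every element has exactly one expression in $H$-canonical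 form. $H$ is a basis of $M$ if $H$ generates $M$ as a semigroup, $H$ is atomic and $M$ has $H$-canonical forms. *)

theory Defs
  imports Main
begin

definition star_left_ehresmann ::
  "('a \<Rightarrow> 'a \<Rightarrow> 'a) \<Rightarrow> 'a \<Rightarrow> ('a \<Rightarrow> 'a) \<Rightarrow> ('a \<Rightarrow> 'a) \<Rightarrow> bool" where
  "star_left_ehresmann mul one pl st \<longleftrightarrow>
     (\<forall>x y z. mul (mul x y) z = mul x (mul y z)) \<and>
     (\<forall>x. mul one x = x) \<and> (\<forall>x. mul x one = x) \<and>
     (\<forall>x. mul (pl x) x = x) \<and>
     (\<forall>x y. pl (mul (pl x) (pl y)) = mul (pl x) (pl y)) \<and>
     (\<forall>x y. mul (pl x) (pl y) = mul (pl y) (pl x)) \<and>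
     (\<forall>x y. pl (mul x y) = pl (mul x (pl y))) \<and>
     (\<forall>x. mul x (st x) = x) \<and>
     (\<forall>x. st (st x) = st x) \<and>
     (\<forall>x y. mul (st x) (st y) = mul (st y) (st x)) \<and>
     (\<forall>x y. mul (st (mul x (st y))) (st y) = st (mul x (st y))) \<and>
     (\<forall>x. pl (st x) = st x) \<and>
     (\<forall>x. st (pl x) = pl x)"

definition projections :: "('a \<Rightarrow> 'a) \<Rightarrow> 'a set" where
  "projections pl = range pl"

definition proj_le :: "('a \<Rightarrow> 'a \<Rightarrow> 'a) \<Rightarrow> 'a \<Rightarrow> 'a \<Rightarrow> bool" where
  "proj_le mul e f \<longleftrightarrow> mul e f = e"

definition proj_less :: "('a \<Rightarrow> 'a \<Rightarrow> 'a) \<Rightarrow> 'a \<Rightarrow> 'a \<Rightarrow> bool" where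
  "proj_less mul e f \<longleftrightarrow> proj_le mul e f \<and> e \<noteq> f"

definition monoid_congruence :: "('a \<Rightarrow> 'a \<Rightarrow> 'a) \<Rightarrow> 'a rel \<Rightarrow> bool" where
  "monoid_congruence mul r \<longleftrightarrow> equiv UNIV r \<and>
     (\<forall>a b c d. (a, b) \<in> r \<longrightarrow> (c, d) \<in> r \<longrightarrow> (mul a c, mul b d) \<in> r)"

definition sigma :: "('a \<Rightarrow> 'a \<Rightarrow> 'a) \<Rightarrow> ('a \<Rightarrow> 'a) \<Rightarrow> 'a rel" where
  "sigma mul pl = \<Inter> {r. monoid_congruence mul r \<and> projections pl \<times> projections pl \<subseteq> r}"

definition atomic ::
  "('a \<Rightarrow> 'a \<Rightarrow> 'a) \<Rightarrow> ('a \<Rightarrow> 'a) \<Rightarrow> ('a \<Rightarrow> 'a) \<Rightarrow> 'a set \<Rightarrow> bool" where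
  "atomic mul pl st H \<longleftrightarrow>
     \<comment> \<open>(H1)\<close>
     projections pl \<subseteq> H \<and>
     \<comment> \<open>(H2)\<close>
     (\<forall>h\<in>H. \<forall>e\<in>projections pl. mul h e \<in> H \<and> st (mul h e) = mul (st h) e) \<and>
     \<comment> \<open>(H3)\<close>
     (\<forall>h\<in>H. \<forall>k\<in>H - projections pl. proj_le mul (pl k) (st h) \<longrightarrow>
         mul h k \<in> H \<and> st (mul h k) = st k) \<and>
     \<comment> \<open>(H4)\<close>
     (\<forall>m. \<exists>h\<in>H. (m, h) \<in> sigma mul pl) \<and>
     \<comment> \<open>(H5)\<close>
     (\<forall>h\<in>H. \<forall>k\<in>H. \<forall>w\<in>H. (mul h k, w) \<in> sigma mul pl \<longrightarrow> st k = st w \<longrightarrow>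
         (\<exists>u\<in>H. (u, h) \<in> sigma mul pl \<and> proj_le mul (pl k) (st u)))"

definition list_prod :: "('a \<Rightarrow> 'a \<Rightarrow> 'a) \<Rightarrow> 'a \<Rightarrow> 'a list \<Rightarrow> 'a" where
  "list_prod mul one hs = foldr mul hs one"

definition canonical_form ::
  "('a \<Rightarrow> 'a \<Rightarrow> 'a) \<Rightarrow> ('a \<Rightarrow> 'a) \<Rightarrow> ('a \<Rightarrow> 'a) \<Rightarrow> 'a set \<Rightarrow> 'a list \<Rightarrow> bool" where
  "canonical_form mul pl st H hs \<longleftrightarrow>
     hs \<noteq> [] \<and> set hs \<subseteq> H \<and>
     (\<forall>i. Suc i < length hs \<longrightarrow> proj_less mul (st (hs ! i)) (pl (hs ! Suc i))) \<and>
     (\<forall>i. 1 \<le> i \<and> i < length hs \<longrightarrow> hs ! i \<notin> projections pl)"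

definition has_canonical_forms ::
  "('a \<Rightarrow> 'a \<Rightarrow> 'a) \<Rightarrow> 'a \<Rightarrow> ('a \<Rightarrow> 'a) \<Rightarrow> ('a \<Rightarrow> 'a) \<Rightarrow> 'a set \<Rightarrow> bool" where
  "has_canonical_forms mul one pl st H \<longleftrightarrow>
     (\<forall>m. \<exists>!hs. canonical_form mul pl st H hs \<and> list_prod mul one hs = m)"

definition generates_semigroup :: "('a \<Rightarrow> 'a \<Rightarrow> 'a) \<Rightarrow> 'a \<Rightarrow> 'a set \<Rightarrow> bool" where
  "generates_semigroup mul one H \<longleftrightarrow>
     (\<forall>m. \<exists>hs. hs \<noteq> [] \<and> set hs \<subseteq> H \<and> list_prod mul one hs = m)"

definition is_basis ::
  "('a \<Rightarrow> 'a \<Rightarrow> 'a) \<Rightarrow> 'a \<Rightarrow> ('a \<Rightarrow> 'a) \<Rightarrow> ('a \<Rightarrow> 'a) \<Rightarrow> 'a set \<Rightarrow> bool" where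
  "is_basis mul one pl st H \<longleftrightarrow>
     generates_semigroup mul one H \<and> atomic mul pl st H \<and> has_canonical_forms mul one pl st H"

end

theory Submission
  imports Defs
begin

locale SLE =
  fixes mul :: "'a \<Rightarrow> 'a \<Rightarrow> 'a" and one :: 'a and pl st :: "'a \<Rightarrow> 'a" and H :: "'a set"
  assumes sle: "star_left_ehresmann mul one pl st"
    and basis: "is_basis mul one pl st H"
begin

lemma assoc: "mul (mul x y) z = mul x (mul y z)" using sle unfolding star_left_ehresmann_def by blast
lemma lone[simp]: "mul one x = x" using sle unfolding star_left_ehresmann_def by blast
lemma rone[simp]: "mul x one = x" using sle unfolding star_left_ehresmann_def by blast
lemma plx: "mul (pl x) x = x" using sle unfolding star_left_ehresmann_def by blast
lemma plpl: "pl (mul (pl x) (pl y)) = mul (pl x) (pl y)" using sle unfolding star_left_ehresmann_def by blast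
lemma plcomm: "mul (pl x) (pl y) = mul (pl y) (pl x)" using sle unfolding star_left_ehresmann_def by blast
lemma plmul: "pl (mul x y) = pl (mul x (pl y))" using sle unfolding star_left_ehresmann_def by blast
lemma stx: "mul x (st x) = x" using sle unfolding star_left_ehresmann_def by blast
lemma stcomm: "mul (st x) (st y) = mul (st y) (st x)" using sle unfolding star_left_ehresmann_def by blast
lemma stax: "mul (st (mul x (st y))) (st y) = st (mul x (st y))" using sle unfolding star_left_ehresmann_def by blast
lemma pl_st: "pl (st x) = st x" using sle unfolding star_left_ehresmann_def by blast
lemma st_pl: "st (pl x) = pl x" using sle unfolding star_left_ehresmann_def by blast

lemma pl_one: "pl one = one" using plx[of one] by simp
lemma pl_pl: "pl (pl x) = pl x" using plpl[of x one] by (simp add: pl_one)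

definition "E = projections pl"

lemma E_pl: "e \<in> E \<Longrightarrow> pl e = e" unfolding E_def projections_def using pl_pl by auto
lemma E_st: "e \<in> E \<Longrightarrow> st e = e" unfolding E_def projections_def using st_pl by auto
lemma E_idem: "e \<in> E \<Longrightarrow> mul e e = e" using plx[of e] E_pl by simp
lemma st_E: "st x \<in> E" unfolding E_def projections_def using pl_st by (metis rangeI)
lemma pl_E: "pl x \<in> E" unfolding E_def projections_def by simp
lemma E_comm: "e \<in> E \<Longrightarrow> f \<in> E \<Longrightarrow> mul e f = mul f e" using plcomm E_pl by metis
lemma E_mul: "e \<in> E \<Longrightarrow> f \<in> E \<Longrightarrow> mul e f \<in> E"
  using plpl[of e f] E_pl unfolding E_def projections_def by (metis rangeI)
lemma st_least: "e \<in> E \<Longrightarrow> mul x e = x \<Longrightarrow> mul (st x) e = st x"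
  using stax[of x e] E_st by metis

lemma le_trans: "a \<in> E \<Longrightarrow> b \<in> E \<Longrightarrow> c \<in> E \<Longrightarrow> proj_le mul a b \<Longrightarrow> proj_le mul b c \<Longrightarrow> proj_le mul a c"
  unfolding proj_le_def by (metis assoc)

lemma lp_cons[simp]: "list_prod mul one (h # hs) = mul h (list_prod mul one hs)"
  unfolding list_prod_def by simp
lemma lp_nil[simp]: "list_prod mul one [] = one" unfolding list_prod_def by simp
lemma lp_app: "list_prod mul one (xs @ ys) = mul (list_prod mul one xs) (list_prod mul one ys)"
  by (induction xs) (auto simp: assoc)
lemma lp_snoc: "list_prod mul one (xs @ [y]) = mul (list_prod mul one xs) y"
  by (simp add: lp_app)

lemma H1: "E \<subseteq> H" using basis unfolding is_basis_def atomic_def E_def by blast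
lemma H2: "h \<in> H \<Longrightarrow> e \<in> E \<Longrightarrow> mul h e \<in> H \<and> st (mul h e) = mul (st h) e"
  using basis unfolding is_basis_def atomic_def E_def by blast
lemma H3: "h \<in> H \<Longrightarrow> k \<in> H \<Longrightarrow> k \<notin> E \<Longrightarrow> proj_le mul (pl k) (st h) \<Longrightarrow> mul h k \<in> H \<and> st (mul h k) = st k"
  using basis unfolding is_basis_def atomic_def E_def by blast
lemma uniq: "canonical_form mul pl st H xs \<Longrightarrow> canonical_form mul pl st H ys \<Longrightarrow>
   list_prod mul one xs = list_prod mul one ys \<Longrightarrow> xs = ys"
  using basis unfolding is_basis_def has_canonical_forms_def by metis

lemma canon_single: "h \<in> H \<Longrightarrow> canonical_form mul pl st H [h]"
  unfolding canonical_form_def by auto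

lemma canon_snoc: "canonical_form mul pl st H rs \<Longrightarrow> g \<in> H \<Longrightarrow> g \<notin> E \<Longrightarrow>
   proj_less mul (st (last rs)) (pl g) \<Longrightarrow> canonical_form mul pl st H (rs @ [g])"
proof -
  assume c: "canonical_form mul pl st H rs" and gH: "g \<in> H" and gE: "g \<notin> E"
    and lt: "proj_less mul (st (last rs)) (pl g)"
  have ne: "rs \<noteq> []" and sH: "set rs \<subseteq> H"
    and a: "\<And>i. Suc i < length rs \<Longrightarrow> proj_less mul (st (rs ! i)) (pl (rs ! Suc i))"
    and b: "\<And>i. 1 \<le> i \<Longrightarrow> i < length rs \<Longrightarrow> rs ! i \<notin> projections pl"
    using c unfolding canonical_form_def by auto
  have a': "proj_less mul (st ((rs @ [g]) ! i)) (pl ((rs @ [g]) ! Suc i))"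
    if "Suc i < length (rs @ [g])" for i
  proof (cases "Suc i < length rs")
    case True then show ?thesis using a[OF True] by (simp add: nth_append)
  next
    case False
    hence "i = length rs - 1" "Suc i = length rs" using that ne by auto
    then show ?thesis using lt ne by (simp add: nth_append last_conv_nth)
  qed
  have b': "(rs @ [g]) ! i \<notin> projections pl" if "1 \<le> i" "i < length (rs @ [g])" for i
  proof (cases "i < length rs")
    case True then show ?thesis using b[OF that(1) True] by (simp add: nth_append)
  next
    case False
    hence "i = length rs" using that by auto
    then show ?thesis using gE by (simp add: E_def)
  qed
  show ?thesis unfolding canonical_form_def using sH gH a' b' by auto
qed

lemma canon_parts: "canonical_form mul pl st H (qs @ [q]) \<Longrightarrow> qs \<noteq> [] \<Longrightarrow>
   canonical_form mul pl st H qs \<and> q \<notin> E \<and> proj_less mul (st (last qs)) (pl q)"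
proof -
  assume c: "canonical_form mul pl st H (qs @ [q])" and ne: "qs \<noteq> []"
  have sH: "set qs \<subseteq> H"
    and a: "\<And>i. Suc i < length (qs @ [q]) \<Longrightarrow> proj_less mul (st ((qs @ [q]) ! i)) (pl ((qs @ [q]) ! Suc i))"
    and b: "\<And>i. 1 \<le> i \<Longrightarrow> i < length (qs @ [q]) \<Longrightarrow> (qs @ [q]) ! i \<notin> projections pl"
    using c unfolding canonical_form_def by auto
  have a': "proj_less mul (st (qs ! i)) (pl (qs ! Suc i))" if "Suc i < length qs" for i
    using a[of i] that by (simp add: nth_append)
  have b': "qs ! i \<notin> projections pl" if "1 \<le> i" "i < length qs" for i
    using b[of i] that by (simp add: nth_append)
  have 1: "canonical_form mul pl st H qs" unfolding canonical_form_def using ne sH a' b' by blast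
  have "(qs @ [q]) ! length qs \<notin> projections pl"
    using b[of "length qs"] ne by (simp add: Suc_leI)
  hence 2: "q \<notin> E" by (simp add: E_def)
  have "proj_less mul (st ((qs @ [q]) ! (length qs - 1))) (pl ((qs @ [q]) ! Suc (length qs - 1)))"
    using a[of "length qs - 1"] ne by simp
  hence 3: "proj_less mul (st (last qs)) (pl q)" using ne
    by (simp add: nth_append last_conv_nth)
  show ?thesis using 1 2 3 by blast
qed

lemma lemC: "(qs = [] \<or> canonical_form mul pl st H qs) \<Longrightarrow> g \<in> H \<Longrightarrow>
   \<exists>rs. canonical_form mul pl st H rs \<and> list_prod mul one rs = mul (list_prod mul one qs) g
       \<and> proj_le mul (st (last rs)) (st g)"
proof (induction qs arbitrary: g rule: rev_induct)
  case Nil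
  then show ?case using canon_single[of g] E_idem[OF st_E] by (auto simp: proj_le_def list_prod_def)
next
  case (snoc q qs)
  have c: "canonical_form mul pl st H (qs @ [q])" using snoc.prems by simp
  have qH: "q \<in> H" using c unfolding canonical_form_def by auto
  have qs': "qs = [] \<or> canonical_form mul pl st H qs" using canon_parts[OF c] by blast
  show ?case
  proof (cases "g \<in> E")
    case True
    have g': "mul q g \<in> H" "st (mul q g) = mul (st q) g" using H2[OF qH True] by auto
    obtain rs where rs: "canonical_form mul pl st H rs"
      "list_prod mul one rs = mul (list_prod mul one qs) (mul q g)"
      "proj_le mul (st (last rs)) (st (mul q g))" using snoc.IH[OF qs' g'(1)] by blast
    have "proj_le mul (st (mul q g)) (st g)"
      using g'(2) E_st[OF True] E_idem[OF True] unfolding proj_le_def by (simp add: assoc)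
    hence "proj_le mul (st (last rs)) (st g)" using le_trans rs(3) st_E by blast
    then show ?thesis using rs by (intro exI[of _ rs]) (simp add: lp_snoc assoc)
  next
    case gE: False
    show ?thesis
    proof (cases "proj_le mul (pl g) (st q)")
      case True
      have g': "mul q g \<in> H" "st (mul q g) = st g" using H3[OF qH snoc.prems(2) gE True] by auto
      obtain rs where rs: "canonical_form mul pl st H rs"
        "list_prod mul one rs = mul (list_prod mul one qs) (mul q g)"
        "proj_le mul (st (last rs)) (st (mul q g))" using snoc.IH[OF qs' g'(1)] by blast
      then show ?thesis using g' by (intro exI[of _ rs]) (simp add: lp_snoc assoc)
    next
      case False
      define f where "f = mul (st q) (pl g)"
      have fE: "f \<in> E" unfolding f_def by (simp add: E_mul st_E pl_E)
      have fq: "mul (st q) f = f" unfolding f_def using E_idem[OF st_E] by (metis assoc)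
      have g': "mul q f \<in> H" "st (mul q f) = f" using H2[OF qH fE] fq by auto
      obtain rs where rs: "canonical_form mul pl st H rs"
        "list_prod mul one rs = mul (list_prod mul one qs) (mul q f)"
        "proj_le mul (st (last rs)) f" using snoc.IH[OF qs' g'(1)] g'(2) by metis
      have fg: "proj_le mul f (pl g)" unfolding f_def proj_le_def
        using E_idem[OF pl_E] by (metis assoc)
      have le: "proj_le mul (st (last rs)) (pl g)" using le_trans[OF st_E fE pl_E rs(3) fg] .
      have ne: "st (last rs) \<noteq> pl g"
      proof
        assume eq: "st (last rs) = pl g"
        hence "mul (pl g) f = pl g" using rs(3) unfolding proj_le_def by simp
        hence "mul (pl g) (st q) = pl g" unfolding f_def
          using E_comm[OF pl_E st_E, of g q] E_idem[OF pl_E, of g] by (metis assoc)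
        thus False using False unfolding proj_le_def by simp
      qed
      have can: "canonical_form mul pl st H (rs @ [g])"
        using canon_snoc[OF rs(1) snoc.prems(2) gE] le ne unfolding proj_less_def by simp
      have "mul f g = mul (st q) g" unfolding f_def by (simp add: assoc plx)
      hence "mul q (mul f g) = mul q g" by (metis assoc stx)
      hence "list_prod mul one (rs @ [g]) = mul (list_prod mul one (qs @ [q])) g"
        using rs(2) by (simp add: lp_snoc assoc)
      moreover have "proj_le mul (st (last (rs @ [g]))) (st g)"
        using E_idem[OF st_E] unfolding proj_le_def by simp
      ultimately show ?thesis using can by blast
    qed
  qed
qed

lemma part_star: "canonical_form mul pl st H hs \<Longrightarrow> st (list_prod mul one hs) = st (last hs)"
proof -
  assume c: "canonical_form mul pl st H hs"
  define m where "m = list_prod mul one hs"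
  have eH: "st m \<in> H" using H1 st_E by blast
  obtain rs where rs: "canonical_form mul pl st H rs" "list_prod mul one rs = mul m (st m)"
    "proj_le mul (st (last rs)) (st (st m))" using lemC[of hs "st m"] c eH m_def by blast
  have "rs = hs" using uniq[OF rs(1) c] rs(2) stx m_def by simp
  hence 1: "mul (st (last hs)) (st m) = st (last hs)" using rs(3) E_st[OF st_E] unfolding proj_le_def by simp
  have ne: "hs \<noteq> []" using c unfolding canonical_form_def by simp
  have "mul m (st (last hs)) = m" unfolding m_def
    using append_butlast_last_id[OF ne] lp_snoc stx assoc by metis
  hence 2: "mul (st m) (st (last hs)) = st m" using st_least st_E by blast
  show ?thesis using 1 2 stcomm m_def by metis
qed

lemma part_plus: "canonical_form mul pl st H hs \<Longrightarrow> pl (list_prod mul one hs) = pl (hd hs)"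
proof (induction hs)
  case Nil then show ?case unfolding canonical_form_def by simp
next
  case (Cons h hs)
  show ?case
  proof (cases "hs = []")
    case True then show ?thesis by simp
  next
    case False
    have ct: "canonical_form mul pl st H hs" using Cons.prems False unfolding canonical_form_def
      by auto
    have "proj_less mul (st ((h#hs) ! 0)) (pl ((h#hs) ! Suc 0))"
      using Cons.prems False unfolding canonical_form_def by auto
    hence le: "mul (st h) (pl (hd hs)) = st h" using False unfolding proj_less_def proj_le_def
      by (simp add: hd_conv_nth)
    have "pl (list_prod mul one (h # hs)) = pl (mul h (pl (hd hs)))"
      using plmul Cons.IH[OF ct] by (metis lp_cons)
    also have "mul h (pl (hd hs)) = h" using le stx assoc by metis
    finally show ?thesis by simp
  qed
qed

lemma part_ii: "h \<in> H \<Longrightarrow> k \<in> H \<Longrightarrow> k \<notin> E \<Longrightarrow>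
   (proj_le mul (pl k) (st h) \<longleftrightarrow> mul h k \<in> H) \<and>
   (proj_le mul (pl k) (st h) \<longrightarrow> st (mul h k) = st k)"
proof -
  assume hH: "h \<in> H" and kH: "k \<in> H" and kE: "k \<notin> E"
  have bk: "proj_le mul (pl k) (st h)" if hk: "mul h k \<in> H"
  proof (rule ccontr)
    assume nle: "\<not> proj_le mul (pl k) (st h)"
    define e where "e = mul (st h) (pl k)"
    have eE: "e \<in> E" unfolding e_def by (simp add: E_mul st_E pl_E)
    have he: "mul h e \<in> H" "st (mul h e) = mul (st h) e" using H2[OF hH eE] by auto
    have se: "mul (st h) e = e" unfolding e_def using E_idem[OF st_E] by (metis assoc)
    have lek: "proj_le mul e (pl k)" unfolding e_def proj_le_def using E_idem[OF pl_E] by (metis assoc)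
    have nek: "e \<noteq> pl k" using nle unfolding e_def proj_le_def
      using E_comm[OF pl_E st_E, of k h] by metis
    have c2: "canonical_form mul pl st H [mul h e, k]"
      using he se lek nek kH kE unfolding canonical_form_def proj_less_def E_def
      by (auto simp: less_Suc_eq)
    have "mul (mul h e) k = mul h k" unfolding e_def
      by (metis assoc plx stx)
    hence "[mul h e, k] = [mul h k]" using uniq[OF c2 canon_single[OF hk]] by simp
    thus False by simp
  qed
  show ?thesis using bk H3[OF hH kH kE] by blast
qed

end

theorem mainTheorem11:
  fixes mul :: "'a \<Rightarrow> 'a \<Rightarrow> 'a" and one :: 'a and pl st :: "'a \<Rightarrow> 'a" and H :: "'a set"
  assumes "star_left_ehresmann mul one pl st"
    and "is_basis mul one pl st H"
  shows "(\<forall>hs. canonical_form mul pl st H hs \<longrightarrow>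
            st (list_prod mul one hs) = st (last hs) \<and>
            pl (list_prod mul one hs) = pl (hd hs))
       \<and> (\<forall>h\<in>H. \<forall>k\<in>H - projections pl.
            (proj_le mul (pl k) (st h) \<longleftrightarrow> mul h k \<in> H) \<and>
            (proj_le mul (pl k) (st h) \<longrightarrow> st (mul h k) = st k))"
proof -
  interpret SLE mul one pl st H using assms by unfold_locales
  show ?thesis using part_star part_plus part_ii unfolding E_def by blast
qed

end
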